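(* Let $0<\alpha \leq \beta \leq d$, let $Q_0\subset\mathbb{R}^d$ be a cube, and suppose $u \in BMO^\alpha(Q_0)$. Then $u \in BMO^\beta(Q_0)$ and $$\|u\|_{BMO^\beta(Q_0)} \leq C\|u\|_{BMO^\alpha(Q_0)}$$ for a constant $C=C(\alpha,\beta)>0$ independent of $u$.
   Context: For $\gamma\in(0,d]$: $\mathcal{H}^{\gamma}_{\infty}(E)= \inf \{\sum_{i} \omega_\gamma r_i^\gamma : E \subset \bigcup_{i} B(x_i,r_i) \}$, $\omega_\gamma= \pi^{\gamma/2}/\Gamma(\gamma/2+1)$. $f$ is $\mathcal{H}^\gamma_\infty$-quasicontinuous if for every $\epsilon>0$ there is an open $O$ with $\mathcal{H}^\gamma_\infty(O)<\epsilon$ and $f|_{O^c}$ continuous. Choquet integral: $\int_A f\,d\mathcal{H}^\gamma_\infty=\int_0^\infty \mathcal{H}^\gamma_\infty(\{x\in A: f(x)>t\})\,dt$ for $f\ge0$. $L^1(Q_0;\mathcal{H}^\gamma_\infty)$: quasicontinuous $f$ with $\int_{Q_0}|f|\,d\mathcal{H}^\gamma_\infty<\infty$. $\|u\|_{BMO^{\gamma}(Q_0)}= \sup_{Q} \inf_{c \in \mathbb{R}} l(Q)^{-\gamma} \int_{Q} |u-c| \,d\mathcal{H}^{\gamma}_\infty$ over finite subcubes $Q\subset Q_0$ with sides parallel to those of $Q_0$, $l(Q)$ = side length; $BMO^\gamma(Q_0)$ is the set of $u\in L^1(Q_0;\mathcal{H}^\gamma_\infty)$ with this finite. *)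

theory Defs
  imports "HOL-Analysis.Analysis"
begin

definition omega_const :: "real \<Rightarrow> real" where
  "omega_const \<gamma> = pi powr (\<gamma> / 2) / Gamma (\<gamma> / 2 + 1)"

text \<open>Hausdorff content of dimension gamma: infimum over countable covers by (open) balls.
  Radii 0 give empty balls, so finite covers are included.\<close>
definition hcontent :: "real \<Rightarrow> 'a::euclidean_space set \<Rightarrow> ennreal" where
  "hcontent \<gamma> E = (INF cr \<in> {(c, r). (\<forall>i. 0 \<le> r i) \<and> E \<subseteq> (\<Union>i. ball (c i) (r i))}.
      (\<Sum>i. ennreal (omega_const \<gamma> * (snd cr i) powr \<gamma>)))"

definition choquet :: "real \<Rightarrow> 'a::euclidean_space set \<Rightarrow> ('a \<Rightarrow> real) \<Rightarrow> ennreal" where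
  "choquet \<gamma> A f = (\<integral>\<^sup>+ t \<in> {0..}. hcontent \<gamma> {x \<in> A. f x > t} \<partial>lborel)"

definition quasicont :: "real \<Rightarrow> 'a::euclidean_space set \<Rightarrow> ('a \<Rightarrow> real) \<Rightarrow> bool" where
  "quasicont \<gamma> Q f \<longleftrightarrow> (\<forall>\<epsilon>>0. \<exists>U. open U \<and> hcontent \<gamma> U < ennreal \<epsilon> \<and> continuous_on (Q - U) f)"

definition L1H :: "real \<Rightarrow> 'a::euclidean_space set \<Rightarrow> ('a \<Rightarrow> real) set" where
  "L1H \<gamma> Q = {f. quasicont \<gamma> Q f \<and> choquet \<gamma> Q (\<lambda>x. \<bar>f x\<bar>) < \<infinity>}"

definition cube :: "'a::euclidean_space \<Rightarrow> real \<Rightarrow> 'a set" where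
  "cube x l = cbox x (x + l *\<^sub>R One)"

definition bmo_norm :: "real \<Rightarrow> 'a::euclidean_space set \<Rightarrow> ('a \<Rightarrow> real) \<Rightarrow> ennreal" where
  "bmo_norm \<gamma> Q0 u = (SUP xl \<in> {(x, l). 0 < l \<and> cube x l \<subseteq> Q0}.
      (INF c::real. ennreal ((snd xl) powr (- \<gamma>)) * choquet \<gamma> (cube (fst xl) (snd xl)) (\<lambda>y. \<bar>u y - c\<bar>)))"

definition BMO :: "real \<Rightarrow> 'a::euclidean_space set \<Rightarrow> ('a \<Rightarrow> real) set" where
  "BMO \<gamma> Q0 = {u. u \<in> L1H \<gamma> Q0 \<and> bmo_norm \<gamma> Q0 u < \<infinity>}"

end

theory Submission
  imports Defs
begin

lemma omega_pos: "0 < \<gamma> \<Longrightarrow> 0 < omega_const \<gamma>"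
  unfolding omega_const_def by (intro divide_pos_pos Gamma_real_pos) auto

lemma ennreal_le_mult_INF:
  fixes g :: ennreal
  assumes K: "0 < K" and h: "\<And>x. x \<in> A \<Longrightarrow> g \<le> ennreal K * f x"
  shows "g \<le> ennreal K * (INF x\<in>A. f x)"
proof -
  have one: "ennreal K * ennreal (1/K) = 1" using K
    by (simp add: ennreal_mult[symmetric])
  have "ennreal (1/K) * g \<le> (INF x\<in>A. f x)"
  proof (rule INF_greatest)
    fix x assume "x \<in> A"
    have "ennreal (1/K) * g \<le> ennreal (1/K) * (ennreal K * f x)"
      using h[OF \<open>x\<in>A\<close>] by (rule mult_left_mono) simp
    also have "\<dots> = f x" using one by (simp add: mult.assoc[symmetric] mult.commute)
    finally show "ennreal (1/K) * g \<le> f x" .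
  qed
  hence "ennreal K * (ennreal (1/K) * g) \<le> ennreal K * (INF x\<in>A. f x)"
    by (rule mult_left_mono) simp
  thus ?thesis using one by (simp add: mult.assoc[symmetric])
qed

lemma sum_cover_le:
  assumes a: "0 < \<alpha>" "\<alpha> \<le> \<beta>" and R: "R > 0" and r: "\<And>i. 0 \<le> r i \<and> r i \<le> R"
  shows "(\<Sum>i. ennreal (omega_const \<beta> * r i powr \<beta>)) \<le>
     ennreal (omega_const \<beta> / omega_const \<alpha> * R powr (\<beta>-\<alpha>)) * (\<Sum>i. ennreal (omega_const \<alpha> * r i powr \<alpha>))"
proof -
  have wa: "omega_const \<alpha> > 0" "omega_const \<beta> > 0" using a omega_pos by auto
  have "(\<Sum>i. ennreal (omega_const \<beta> * r i powr \<beta>)) \<le>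
     (\<Sum>i. ennreal (omega_const \<beta> / omega_const \<alpha> * R powr (\<beta>-\<alpha>)) * ennreal (omega_const \<alpha> * r i powr \<alpha>))"
  proof (rule suminf_le[OF _ summableI summableI])
    fix i
    show "ennreal (omega_const \<beta> * r i powr \<beta>) \<le> ennreal (omega_const \<beta> / omega_const \<alpha> * R powr (\<beta>-\<alpha>)) * ennreal (omega_const \<alpha> * r i powr \<alpha>)"
    proof (cases "r i = 0")
      case True thus ?thesis by simp
    next
      case False
      hence ri: "r i > 0" using r[of i] by auto
      have "r i powr \<beta> = r i powr (\<beta>-\<alpha>) * r i powr \<alpha>" by (simp add: powr_add[symmetric])
      also have "\<dots> \<le> R powr (\<beta>-\<alpha>) * r i powr \<alpha>"
        by (rule mult_right_mono, rule powr_mono2) (use a r[of i] in auto)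
      finally have "omega_const \<beta> * r i powr \<beta> \<le> omega_const \<beta> * (R powr (\<beta>-\<alpha>) * r i powr \<alpha>)"
        using wa by (intro mult_left_mono) auto
      also have "\<dots> = omega_const \<beta> / omega_const \<alpha> * R powr (\<beta>-\<alpha>) * (omega_const \<alpha> * r i powr \<alpha>)"
        using wa by (simp add: field_simps)
      finally show ?thesis using wa
        by (subst ennreal_mult[symmetric]) (auto intro!: ennreal_leI)
    qed
  qed
  thus ?thesis by (simp add: ennreal_suminf_cmult)
qed

lemma hcontent_mono: "E \<subseteq> F \<Longrightarrow> hcontent \<gamma> E \<le> hcontent \<gamma> F"
  unfolding hcontent_def by (rule INF_superset_mono) auto

lemma cube_ball:
  fixes x :: "'a::euclidean_space"
  assumes "l > 0"
  shows "cube x l \<subseteq> ball x ((real DIM('a) + 1) * l)"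
proof
  fix y assume "y \<in> cube x l"
  hence b: "\<And>i. i \<in> Basis \<Longrightarrow> \<bar>(y - x) \<bullet> i\<bar> \<le> l"
    unfolding cube_def mem_box by (auto simp: inner_diff_left inner_add_left)
  have "dist x y = norm (y - x)" by (simp add: dist_norm norm_minus_commute)
  also have "\<dots> \<le> (\<Sum>i\<in>Basis. \<bar>(y - x) \<bullet> i\<bar>)" by (rule norm_le_l1)
  also have "\<dots> \<le> (\<Sum>i\<in>(Basis::'a set). l)" by (rule sum_mono) (rule b)
  also have "\<dots> = real DIM('a) * l" by simp
  also have "\<dots> < (real DIM('a) + 1) * l" using assms by (simp add: distrib_right)
  finally show "y \<in> ball x ((real DIM('a) + 1) * l)" by simp
qed

lemma suminf_single_ennreal:
  "(\<Sum>i. ennreal (w * (if i = (0::nat) then R else 0) powr g)) = ennreal (w * R powr g)"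
  by (subst suminf_finite[of "{0}"]) auto

lemma hcontent_ball_bound:
  fixes E :: "'a::euclidean_space set"
  assumes a: "0 < \<alpha>" "\<alpha> \<le> \<beta>" and R: "R > 0" and E: "E \<subseteq> ball x R"
  shows "hcontent \<beta> E \<le> ennreal (omega_const \<beta> / omega_const \<alpha> * R powr (\<beta>-\<alpha>)) * hcontent \<alpha> E"
proof -
  have wa: "omega_const \<alpha> > 0" "omega_const \<beta> > 0" using a omega_pos by auto
  define K where "K = omega_const \<beta> / omega_const \<alpha> * R powr (\<beta>-\<alpha>)"
  have K: "K > 0" unfolding K_def using wa R by auto
  show ?thesis unfolding K_def[symmetric] unfolding hcontent_def[of \<alpha>]
  proof (rule ennreal_le_mult_INF[OF K])
    fix cr :: "(nat \<Rightarrow> 'a) \<times> (nat \<Rightarrow> real)" assume "cr \<in> {(c, r). (\<forall>i. 0 \<le> r i) \<and> E \<subseteq> (\<Union>i. ball (c i) (r i))}"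
    then obtain c r where cr: "cr = (c, r)" "\<forall>i. 0 \<le> r i" "E \<subseteq> (\<Union>i. ball (c i) (r i))" by auto
    show "hcontent \<beta> E \<le> ennreal K * (\<Sum>i. ennreal (omega_const \<alpha> * snd cr i powr \<alpha>))"
    proof (cases "\<forall>i. r i \<le> R")
      case True
      have "hcontent \<beta> E \<le> (\<Sum>i. ennreal (omega_const \<beta> * r i powr \<beta>))"
        unfolding hcontent_def by (rule INF_lower2[of "(c, r)"]) (use cr in auto)
      also have "\<dots> \<le> ennreal K * (\<Sum>i. ennreal (omega_const \<alpha> * r i powr \<alpha>))"
        unfolding K_def by (rule sum_cover_le) (use a R True cr in auto)
      finally show ?thesis using cr by simp
    next
      case False
      then obtain j where j: "r j > R" by (auto simp: not_le)
      define r' where "r' = (\<lambda>i::nat. if i = 0 then R else 0)"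
      have "hcontent \<beta> E \<le> (\<Sum>i. ennreal (omega_const \<beta> * r' i powr \<beta>))"
        unfolding hcontent_def
      proof (rule INF_lower2[of "(\<lambda>_. x, r')"])
        show "(\<lambda>_. x, r') \<in> {(c, r). (\<forall>i. 0 \<le> r i) \<and> E \<subseteq> (\<Union>i. ball (c i) (r i))}"
          using E R unfolding r'_def by auto
      qed simp
      also have "\<dots> \<le> ennreal K * (\<Sum>i. ennreal (omega_const \<alpha> * r' i powr \<alpha>))"
        unfolding K_def by (rule sum_cover_le) (use a R in \<open>auto simp: r'_def\<close>)
      also have "(\<Sum>i. ennreal (omega_const \<alpha> * r' i powr \<alpha>)) = ennreal (omega_const \<alpha> * R powr \<alpha>)"
        unfolding r'_def by (rule suminf_single_ennreal)
      also have "\<dots> \<le> ennreal (omega_const \<alpha> * r j powr \<alpha>)"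
        using wa R j a by (intro ennreal_leI mult_left_mono powr_mono2) auto
      also have "\<dots> \<le> (\<Sum>i. ennreal (omega_const \<alpha> * r i powr \<alpha>))"
        using sum_le_suminf[OF summableI, of "{j}" "\<lambda>i. ennreal (omega_const \<alpha> * r i powr \<alpha>)"] by simp
      finally show ?thesis using cr by (simp add: mult_left_mono)
    qed
  qed
qed


lemma hcontent_small:
  fixes U :: "'a::euclidean_space set"
  assumes a: "0 < \<alpha>" "\<alpha> \<le> \<beta>" and d: "hcontent \<alpha> U < ennreal \<delta>" "\<delta> \<le> omega_const \<alpha>"
  shows "hcontent \<beta> U \<le> ennreal (omega_const \<beta> / omega_const \<alpha>) * ennreal \<delta>"
proof -
  have wa: "omega_const \<alpha> > 0" "omega_const \<beta> > 0" using a omega_pos by auto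
  obtain c r where cr: "\<forall>i. 0 \<le> r i" "U \<subseteq> (\<Union>i. ball (c i) (r i))"
    and S: "(\<Sum>i. ennreal (omega_const \<alpha> * r i powr \<alpha>)) < ennreal \<delta>"
    using d(1) unfolding hcontent_def INF_less_iff by auto
  have r1: "r i \<le> 1" for i
  proof (rule ccontr)
    assume "\<not> r i \<le> 1"
    hence "1 \<le> r i powr \<alpha>" using a by (intro ge_one_powr_ge_zero) auto
    hence "ennreal (omega_const \<alpha>) \<le> ennreal (omega_const \<alpha> * r i powr \<alpha>)"
      using wa by (intro ennreal_leI) (simp add: mult_le_cancel_left1)
    also have "\<dots> \<le> (\<Sum>i. ennreal (omega_const \<alpha> * r i powr \<alpha>))"
      using sum_le_suminf[OF summableI, of "{i}" "\<lambda>i. ennreal (omega_const \<alpha> * r i powr \<alpha>)"] by simp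
    also have "\<dots> < ennreal \<delta>" by (rule S)
    finally show False using ennreal_leI[OF d(2)] by (simp add: not_le[symmetric])
  qed
  have "hcontent \<beta> U \<le> (\<Sum>i. ennreal (omega_const \<beta> * r i powr \<beta>))"
    unfolding hcontent_def by (rule INF_lower2[of "(c, r)"]) (use cr in auto)
  also have "\<dots> \<le> ennreal (omega_const \<beta> / omega_const \<alpha> * 1 powr (\<beta>-\<alpha>)) * (\<Sum>i. ennreal (omega_const \<alpha> * r i powr \<alpha>))"
    by (rule sum_cover_le) (use a r1 cr in auto)
  also have "\<dots> \<le> ennreal (omega_const \<beta> / omega_const \<alpha>) * ennreal \<delta>"
    using S by (simp add: mult_left_mono less_imp_le)
  finally show ?thesis .
qed

lemma antimono_measurable:
  fixes g :: "real \<Rightarrow> ennreal"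
  assumes "\<And>s t. s \<le> t \<Longrightarrow> g t \<le> g s"
  shows "g \<in> borel_measurable lborel"
proof (rule borel_measurableI_greater)
  fix y
  have "is_interval {t. y < g t}"
    unfolding is_interval_1 using assms by (auto intro: less_le_trans)
  hence "{t. y < g t} \<in> sets borel" by (rule real_interval_borel_measurable)
  thus "{x \<in> space lborel. y < g x} \<in> sets lborel" by simp
qed

lemma choquet_bound:
  fixes Q :: "'a::euclidean_space set"
  assumes K: "K > 0" and h: "\<And>S. S \<subseteq> Q \<Longrightarrow> hcontent \<beta> S \<le> ennreal K * hcontent \<alpha> S"
  shows "choquet \<beta> Q f \<le> ennreal K * choquet \<alpha> Q f"
proof -
  define g where "g t = hcontent \<alpha> {x \<in> Q. f x > t}" for t
  have gm: "g \<in> borel_measurable lborel"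
    by (rule antimono_measurable) (unfold g_def, rule hcontent_mono, auto)
  have "choquet \<beta> Q f \<le> (\<integral>\<^sup>+ t. ennreal K * (g t * indicator {0..} t) \<partial>lborel)"
    unfolding choquet_def g_def
    by (rule nn_integral_mono) (auto simp: indicator_def intro: h)
  also have "\<dots> = ennreal K * (\<integral>\<^sup>+ t. g t * indicator {0..} t \<partial>lborel)"
    by (rule nn_integral_cmult) (use gm in measurable)
  finally show ?thesis unfolding choquet_def g_def .
qed


theorem corollary1p6:
  fixes \<alpha> \<beta> :: real
  assumes "0 < \<alpha>" "\<alpha> \<le> \<beta>" "\<beta> \<le> real DIM('a::euclidean_space)"
  shows "\<exists>C>0. \<forall>(x0::'a) l0 (u::'a \<Rightarrow> real). 0 < l0 \<and> u \<in> BMO \<alpha> (cube x0 l0) \<longrightarrow>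
           u \<in> BMO \<beta> (cube x0 l0) \<and>
           bmo_norm \<beta> (cube x0 l0) u \<le> ennreal C * bmo_norm \<alpha> (cube x0 l0) u"
proof -
  have a: "0 < \<alpha>" "\<alpha> \<le> \<beta>" using assms by auto
  have wa: "omega_const \<alpha> > 0" "omega_const \<beta> > 0" using a omega_pos by auto
  define q where "q = omega_const \<beta> / omega_const \<alpha>"
  have q: "q > 0" unfolding q_def using wa by auto
  define D where "D = real DIM('a) + 1"
  have D: "D > 0" unfolding D_def by simp
  define C where "C = q * D powr (\<beta> - \<alpha>)"
  have C: "C > 0" unfolding C_def using q D by auto
  have hc: "hcontent \<beta> S \<le> ennreal (C * l powr (\<beta>-\<alpha>)) * hcontent \<alpha> S"
    if "l > 0" "S \<subseteq> cube x l" for l and x :: 'a and S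
  proof -
    have "hcontent \<beta> S \<le> ennreal (q * (D * l) powr (\<beta>-\<alpha>)) * hcontent \<alpha> S"
      unfolding q_def
      by (rule hcontent_ball_bound[OF a _ _, of _ _ x])
         (use that D cube_ball[of l x] in \<open>auto simp: D_def\<close>)
    also have "q * (D * l) powr (\<beta>-\<alpha>) = C * l powr (\<beta>-\<alpha>)"
      unfolding C_def using D that by (simp add: powr_mult)
    finally show ?thesis .
  qed
  show ?thesis
  proof (intro exI[of _ C] conjI allI impI C)
    fix x0 :: 'a and l0 :: real and u :: "'a \<Rightarrow> real"
    assume H: "0 < l0 \<and> u \<in> BMO \<alpha> (cube x0 l0)"
    hence l0: "l0 > 0" and qc: "quasicont \<alpha> (cube x0 l0) u"
      and ch: "choquet \<alpha> (cube x0 l0) (\<lambda>x. \<bar>u x\<bar>) < \<infinity>"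
      and bm: "bmo_norm \<alpha> (cube x0 l0) u < \<infinity>"
      unfolding BMO_def L1H_def by auto
    have qcb: "quasicont \<beta> (cube x0 l0) u"
      unfolding quasicont_def
    proof (intro allI impI)
      fix \<epsilon> :: real assume e: "\<epsilon> > 0"
      define \<delta> where "\<delta> = min (omega_const \<alpha>) (\<epsilon> / (2 * q))"
      have d: "\<delta> > 0" "\<delta> \<le> omega_const \<alpha>" "q * \<delta> < \<epsilon>"
        unfolding \<delta>_def using wa e q by (auto simp: min_def field_simps)
      obtain U where U: "open U" "hcontent \<alpha> U < ennreal \<delta>" "continuous_on (cube x0 l0 - U) u"
        using qc d(1) unfolding quasicont_def by blast
      have "hcontent \<beta> U \<le> ennreal q * ennreal \<delta>"
        unfolding q_def by (rule hcontent_small[OF a U(2) d(2)])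
      also have "\<dots> = ennreal (q * \<delta>)" using q d by (simp add: ennreal_mult)
      also have "\<dots> < ennreal \<epsilon>" using d e by (simp add: ennreal_lessI)
      finally show "\<exists>U. open U \<and> hcontent \<beta> U < ennreal \<epsilon> \<and> continuous_on (cube x0 l0 - U) u"
        using U by blast
    qed
    have chb: "choquet \<beta> (cube x0 l0) (\<lambda>x. \<bar>u x\<bar>) \<le> ennreal (C * l0 powr (\<beta>-\<alpha>)) * choquet \<alpha> (cube x0 l0) (\<lambda>x. \<bar>u x\<bar>)"
      by (rule choquet_bound) (use C l0 hc in auto)
    also have "\<dots> < \<infinity>" using ch by (simp add: ennreal_mult_less_top)
    finally have chb': "choquet \<beta> (cube x0 l0) (\<lambda>x. \<bar>u x\<bar>) < \<infinity>" .
    have bmb: "bmo_norm \<beta> (cube x0 l0) u \<le> ennreal C * bmo_norm \<alpha> (cube x0 l0) u"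
      unfolding bmo_norm_def
    proof (rule SUP_least)
      fix xl assume "xl \<in> {(x, l). 0 < l \<and> cube x l \<subseteq> cube x0 l0}"
      then obtain x l where xl: "xl = (x, l)" "l > 0" "cube x l \<subseteq> cube x0 l0" by auto
      have "(INF c. ennreal (l powr - \<beta>) * choquet \<beta> (cube x l) (\<lambda>y. \<bar>u y - c\<bar>))
          \<le> ennreal C * (INF c. ennreal (l powr - \<alpha>) * choquet \<alpha> (cube x l) (\<lambda>y. \<bar>u y - c\<bar>))"
      proof (rule ennreal_le_mult_INF[OF C])
        fix c :: real
        have "(INF c. ennreal (l powr - \<beta>) * choquet \<beta> (cube x l) (\<lambda>y. \<bar>u y - c\<bar>))
            \<le> ennreal (l powr - \<beta>) * choquet \<beta> (cube x l) (\<lambda>y. \<bar>u y - c\<bar>)"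
          by (rule INF_lower) simp
        also have "\<dots> \<le> ennreal (l powr - \<beta>) * (ennreal (C * l powr (\<beta>-\<alpha>)) * choquet \<alpha> (cube x l) (\<lambda>y. \<bar>u y - c\<bar>))"
          by (intro mult_left_mono choquet_bound) (use C xl hc in auto)
        also have "\<dots> = ennreal (l powr - \<beta> * (C * l powr (\<beta>-\<alpha>))) * choquet \<alpha> (cube x l) (\<lambda>y. \<bar>u y - c\<bar>)"
          using C by (simp add: ennreal_mult mult.assoc)
        also have "l powr - \<beta> * (C * l powr (\<beta>-\<alpha>)) = C * l powr - \<alpha>"
          by (simp add: powr_add[symmetric] mult.left_commute)
        also have "ennreal (C * l powr - \<alpha>) * choquet \<alpha> (cube x l) (\<lambda>y. \<bar>u y - c\<bar>)
            = ennreal C * (ennreal (l powr - \<alpha>) * choquet \<alpha> (cube x l) (\<lambda>y. \<bar>u y - c\<bar>))"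
          using C by (simp add: ennreal_mult mult.assoc)
        finally show "(INF c. ennreal (l powr - \<beta>) * choquet \<beta> (cube x l) (\<lambda>y. \<bar>u y - c\<bar>))
            \<le> ennreal C * (ennreal (l powr - \<alpha>) * choquet \<alpha> (cube x l) (\<lambda>y. \<bar>u y - c\<bar>))" .
      qed
      also have "\<dots> \<le> ennreal C * (SUP xl\<in>{(x, l). 0 < l \<and> cube x l \<subseteq> cube x0 l0}.
          INF c::real. ennreal (snd xl powr - \<alpha>) * choquet \<alpha> (cube (fst xl) (snd xl)) (\<lambda>y. \<bar>u y - c\<bar>))"
        by (intro mult_left_mono SUP_upper2[of "(x, l)"]) (use xl in auto)
      finally show "(INF c::real. ennreal (snd xl powr - \<beta>) * choquet \<beta> (cube (fst xl) (snd xl)) (\<lambda>y. \<bar>u y - c\<bar>))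
          \<le> ennreal C * (SUP xl\<in>{(x, l). 0 < l \<and> cube x l \<subseteq> cube x0 l0}.
          INF c::real. ennreal (snd xl powr - \<alpha>) * choquet \<alpha> (cube (fst xl) (snd xl)) (\<lambda>y. \<bar>u y - c\<bar>))"
        using xl by simp
    qed
    have "bmo_norm \<beta> (cube x0 l0) u < \<infinity>"
      using le_less_trans[OF bmb] bm by (simp add: ennreal_mult_less_top)
    thus "u \<in> BMO \<beta> (cube x0 l0)" using qcb chb' unfolding BMO_def L1H_def by auto
    show "bmo_norm \<beta> (cube x0 l0) u \<le> ennreal C * bmo_norm \<alpha> (cube x0 l0) u" by (rule bmb)
  qed
qed

end
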